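(* Let $k,g,r_0$ be positive integers with $k\mid r_0$. For every DAG $G$ (for which the quantities are finite), $\mathrm{OPT}^{(k)}/\mathrm{OPT}^{(1)}\ge 1/k$, where $\mathrm{OPT}^{(1)}$ is the MPP optimum of $G$ with $1$ processor and fast memory $r=r_0$, and $\mathrm{OPT}^{(k)}$ is the MPP optimum of $G$ with $k$ processors and fast memory $r=r_0/k$ each (same $g$). Moreover, whenever $r_0/k\ge 2$, there exist DAGs for which $\mathrm{OPT}^{(k)}/\mathrm{OPT}^{(1)}=1/k$.
   Context: Multiprocessor red-blue pebbling (MPP). Input: a DAG $G=(V,E)$ with $n=|V|$ and positive integers $k$ (number of processors), $r$ (fast-memory size per processor), $g$ (cost of an I/O step). $\Delta_{in}$ denotes the maximum in-degree of $G$; sources/sinks are nodes of in-degree/out-degree $0$. A configuration is a tuple $(R^1,\dots,R^k,B)$ of subsets of $V$ ($R^j$ = nodes carrying a red pebble of processor $j$, $B$ = nodes carrying a blue pebble); it is valid if $|R^j|\le r$ for all $j$. The initial configuration has all sets empty; a configuration is terminal if every sink lies in $B\cup\bigcup_j R^j$. The transition rules are: (R1) for some $m\le k$, pairwise distinct processors $j_1,\dots,j_m$ and nodes $v_1,\dots,v_m$ with $v_i\in R^{j_i}$, add each $v_i$ to $B$ (cost $g$); (R2) for some $m\le k$, pairwise distinct processors $j_1,\dots,j_m$ and nodes $v_1,\dots,v_m\in B$, add each $v_i$ to $R^{j_i}$ (cost $g$); (R3) for some $m\le k$, pairwise distinct processors $j_1,\dots,j_m$ and nodes $v_1,\dots,v_m$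 such that every in-neighbor of $v_i$ lies in $R^{j_i}$, add each $v_i$ to $R^{j_i}$ (cost $1$); (R4) remove a single red or blue pebble (cost $0$). A pebbling strategy is a sequence of valid configurations starting at the initial configuration and ending at a terminal one, each obtained from its predecessor by one rule; its cost is the sum of the costs of the rules applied. $\mathrm{OPT}$ denotes the minimum cost of a pebbling strategy. Applications of (R1),(R2) are called I/O steps and applications of (R3) compute steps. *)

theory Defs
  imports Complex_Main
begin

text \<open>A DAG is given by a finite vertex set V and an edge set E (pairs (u,v) meaning u -> v).  A configuration is a pair (R, B) where R j is the
  set of nodes carrying a red pebble of processor j and B the set of blue-pebbled nodes.\<close>

definition dag :: "'a set \<Rightarrow> ('a \<times> 'a) set \<Rightarrow> bool" where
  "dag V E \<longleftrightarrow> finite V \<and> E \<subseteq> V \<times> V \<and> acyclic E"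

definition is_sink :: "'a set \<Rightarrow> ('a \<times> 'a) set \<Rightarrow> 'a \<Rightarrow> bool" where
  "is_sink V E v \<longleftrightarrow> v \<in> V \<and> (\<forall>w. (v, w) \<notin> E)"

type_synonym 'a conf = "(nat \<Rightarrow> 'a set) \<times> 'a set"

definition init_conf :: "'a conf" where
  "init_conf = (\<lambda>_. {}, {})"

definition valid_conf :: "nat \<Rightarrow> nat \<Rightarrow> 'a conf \<Rightarrow> bool" where
  "valid_conf k r c \<longleftrightarrow> (\<forall>j<k. card (fst c j) \<le> r)"

definition terminal_conf :: "'a set \<Rightarrow> ('a \<times> 'a) set \<Rightarrow> nat \<Rightarrow> 'a conf \<Rightarrow> bool" where
  "terminal_conf V E k c \<longleftrightarrow>
     (\<forall>v. is_sink V E v \<longrightarrow> v \<in> snd c \<union> (\<Union>j<k. fst c j))"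

text \<open>One transition, labelled with its cost. The set J is the set of (pairwise distinct)
  processors taking part (so m = card J, 1 <= m <= k), and v j is the node handled by processor j.\<close>

inductive mpp_step :: "'a set \<Rightarrow> ('a \<times> 'a) set \<Rightarrow> nat \<Rightarrow> nat \<Rightarrow> 'a conf \<Rightarrow> 'a conf \<Rightarrow> nat \<Rightarrow> bool"
  for V :: "'a set" and E :: "('a \<times> 'a) set" and k :: nat and g :: nat where
  R1: "\<lbrakk>J \<subseteq> {..<k}; J \<noteq> {}; \<forall>j\<in>J. v j \<in> R j\<rbrakk>
       \<Longrightarrow> mpp_step V E k g (R, B) (R, B \<union> v ` J) g"
| R2: "\<lbrakk>J \<subseteq> {..<k}; J \<noteq> {}; \<forall>j\<in>J. v j \<in> B\<rbrakk>
       \<Longrightarrow> mpp_step V E k g (R, B) (\<lambda>j. if j \<in> J then insert (v j) (R j) else R j, B) g"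
| R3: "\<lbrakk>J \<subseteq> {..<k}; J \<noteq> {}; \<forall>j\<in>J. v j \<in> V \<and> (\<forall>u. (u, v j) \<in> E \<longrightarrow> u \<in> R j)\<rbrakk>
       \<Longrightarrow> mpp_step V E k g (R, B) (\<lambda>j. if j \<in> J then insert (v j) (R j) else R j, B) 1"
| R4_red: "\<lbrakk>j < k; x \<in> R j\<rbrakk> \<Longrightarrow> mpp_step V E k g (R, B) (R(j := R j - {x}), B) 0"
| R4_blue: "x \<in> B \<Longrightarrow> mpp_step V E k g (R, B) (R, B - {x}) 0"

definition is_strategy :: "'a set \<Rightarrow> ('a \<times> 'a) set \<Rightarrow> nat \<Rightarrow> nat \<Rightarrow> nat \<Rightarrow>
    'a conf list \<Rightarrow> nat list \<Rightarrow> bool" where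
  "is_strategy V E k r g cs ws \<longleftrightarrow>
     cs \<noteq> [] \<and> hd cs = init_conf \<and> length cs = Suc (length ws) \<and>
     (\<forall>i < length ws. mpp_step V E k g (cs ! i) (cs ! Suc i) (ws ! i)) \<and>
     (\<forall>c \<in> set cs. valid_conf k r c) \<and> terminal_conf V E k (last cs)"

definition pebblable :: "'a set \<Rightarrow> ('a \<times> 'a) set \<Rightarrow> nat \<Rightarrow> nat \<Rightarrow> nat \<Rightarrow> bool" where
  "pebblable V E k r g \<longleftrightarrow> (\<exists>cs ws. is_strategy V E k r g cs ws)"

definition OPT :: "'a set \<Rightarrow> ('a \<times> 'a) set \<Rightarrow> nat \<Rightarrow> nat \<Rightarrow> nat \<Rightarrow> nat" where
  "OPT V E k r g = (LEAST c. \<exists>cs ws. is_strategy V E k r g cs ws \<and> sum_list ws = c)"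

end

theory Submission
  imports Defs
begin


inductive mpath :: "'a set \<Rightarrow> ('a \<times> 'a) set \<Rightarrow> nat \<Rightarrow> nat \<Rightarrow> nat \<Rightarrow> 'a conf \<Rightarrow> 'a conf \<Rightarrow> nat \<Rightarrow> bool"
  for V E k r g where
  pnil: "valid_conf k r c \<Longrightarrow> mpath V E k r g c c 0"
| pcons: "valid_conf k r c \<Longrightarrow> mpp_step V E k g c c' w \<Longrightarrow> mpath V E k r g c' c'' w'
          \<Longrightarrow> mpath V E k r g c c'' (w + w')"

lemma mpath_valid: "mpath V E k r g c c' w \<Longrightarrow> valid_conf k r c \<and> valid_conf k r c'"
  by (induction rule: mpath.induct) auto

lemma mpath_trans: "mpath V E k r g a b w1 \<Longrightarrow> mpath V E k r g b c w2 \<Longrightarrow> mpath V E k r g a c (w1 + w2)"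
proof (induction rule: mpath.induct)
  case (pnil c)
  then show ?case by simp
next
  case (pcons c c' w c'' w')
  then show ?case by (metis add.assoc mpath.pcons)
qed

lemma mpath_snoc: "mpath V E k r g a b w1 \<Longrightarrow> mpp_step V E k g b c w \<Longrightarrow> valid_conf k r c
   \<Longrightarrow> mpath V E k r g a c (w1 + w)"
  using mpath_trans[of V E k r g a b w1 c w] mpath_valid[of V E k r g a b w1]
    mpath.pcons[of k r b V E g c w c 0] mpath.pnil[of k r c] by simp

lemma strat_to_path_aux:
  "length cs = Suc (length ws) \<Longrightarrow> (\<forall>i<length ws. mpp_step V E k g (cs ! i) (cs ! Suc i) (ws ! i))
   \<Longrightarrow> (\<forall>c\<in>set cs. valid_conf k r c) \<Longrightarrow> mpath V E k r g (hd cs) (last cs) (sum_list ws)"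
proof (induction ws arbitrary: cs)
  case Nil
  then obtain c where "cs = [c]" by (cases cs) auto
  then show ?case using Nil by (auto intro: mpath.pnil)
next
  case (Cons w ws)
  then obtain c0 cs' where cs: "cs = c0 # cs'" by (cases cs) auto
  with Cons.prems have len: "length cs' = Suc (length ws)" by simp
  then have ne: "cs' \<noteq> []" by auto
  have st: "\<forall>i<length ws. mpp_step V E k g (cs' ! i) (cs' ! Suc i) (ws ! i)"
    using Cons.prems(2) cs by fastforce
  have IH: "mpath V E k r g (hd cs') (last cs') (sum_list ws)"
    using Cons.IH[OF len st] Cons.prems(3) cs by auto
  have s0: "mpp_step V E k g c0 (hd cs') w" using Cons.prems(2) cs ne
    by (metis hd_conv_nth length_Cons nth_Cons_0 nth_Cons_Suc zero_less_Suc)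
  show ?case using mpath.pcons[OF _ s0 IH] Cons.prems(3) cs ne by auto
qed

lemma strat_to_path: "is_strategy V E k r g cs ws \<Longrightarrow> mpath V E k r g init_conf (last cs) (sum_list ws)"
  unfolding is_strategy_def using strat_to_path_aux by metis

lemma path_to_list: "mpath V E k r g c c' w \<Longrightarrow> \<exists>cs ws. cs \<noteq> [] \<and> hd cs = c \<and> last cs = c' \<and>
   length cs = Suc (length ws) \<and> (\<forall>i<length ws. mpp_step V E k g (cs ! i) (cs ! Suc i) (ws ! i)) \<and>
   (\<forall>x\<in>set cs. valid_conf k r x) \<and> sum_list ws = w"
proof (induction rule: mpath.induct)
  case (pnil c)
  then show ?case by (intro exI[of _ "[c]"] exI[of _ "[]"]) auto
next
  case (pcons c c' w c'' w')
  then obtain cs ws where H: "cs \<noteq> [] \<and> hd cs = c' \<and> last cs = c'' \<and>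
   length cs = Suc (length ws) \<and> (\<forall>i<length ws. mpp_step V E k g (cs ! i) (cs ! Suc i) (ws ! i)) \<and>
   (\<forall>x\<in>set cs. valid_conf k r x) \<and> sum_list ws = w'" by blast
  have "\<forall>i<length (w # ws). mpp_step V E k g ((c # cs) ! i) ((c # cs) ! Suc i) ((w # ws) ! i)"
  proof (intro allI impI)
    fix i assume "i < length (w # ws)"
    then show "mpp_step V E k g ((c # cs) ! i) ((c # cs) ! Suc i) ((w # ws) ! i)"
      using H pcons.hyps(2) by (cases i) (auto simp: hd_conv_nth)
  qed
  then show ?case using H pcons.hyps(1)
    by (intro exI[of _ "c # cs"] exI[of _ "w # ws"]) auto
qed

lemma path_to_strat: "mpath V E k r g init_conf c w \<Longrightarrow> terminal_conf V E k c \<Longrightarrow>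
   \<exists>cs ws. is_strategy V E k r g cs ws \<and> sum_list ws = w"
  unfolding is_strategy_def using path_to_list by metis

lemma opt_ex: "pebblable V E k r g \<Longrightarrow> \<exists>cs ws. is_strategy V E k r g cs ws \<and> sum_list ws = OPT V E k r g"
  unfolding pebblable_def OPT_def by (rule LeastI_ex) blast

lemma opt_le: "is_strategy V E k r g cs ws \<Longrightarrow> OPT V E k r g \<le> sum_list ws"
  unfolding OPT_def by (rule Least_le) blast



definition U :: "nat \<Rightarrow> 'a conf \<Rightarrow> 'a set" where "U k c = (\<Union>j<k. fst c j)"
definition red1 :: "'a set \<Rightarrow> nat \<Rightarrow> 'a set" where "red1 A = (\<lambda>j. if j = 0 then A else {})"
definition phi :: "nat \<Rightarrow> 'a conf \<Rightarrow> 'a conf" where "phi k c = (red1 (U k c), snd c)"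
definition fin :: "'a conf \<Rightarrow> bool" where "fin c \<longleftrightarrow> (\<forall>j. finite (fst c j)) \<and> finite (snd c)"

lemma valid1_red1: "valid_conf (Suc 0) R (red1 X, B) \<longleftrightarrow> card X \<le> R"
  by (auto simp: valid_conf_def red1_def)

lemma fin_step: "mpp_step V E k g c c' w \<Longrightarrow> fin c \<Longrightarrow> fin c'"
proof (induction rule: mpp_step.induct)
  case (R1 J v R B)
  then have "finite J" using finite_subset by blast
  then show ?case using R1 by (auto simp: fin_def)
qed (auto simp: fin_def)

lemma valid_phi: "valid_conf k r c \<Longrightarrow> valid_conf (Suc 0) (k * r) (phi k c)"
proof -
  assume v: "valid_conf k r c"
  have "card (U k c) \<le> (\<Sum>j<k. card (fst c j))" unfolding U_def by (rule card_UN_le) simp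
  also have "\<dots> \<le> of_nat (card {..<k}) * r" by (rule sum_bounded_above) (use v in \<open>auto simp: valid_conf_def\<close>)
  finally show ?thesis by (simp add: phi_def valid1_red1)
qed

lemma add_blue: "finite A \<Longrightarrow> A \<subseteq> X \<Longrightarrow> valid_conf (Suc 0) R (red1 X, B) \<Longrightarrow>
   mpath V E (Suc 0) R g (red1 X, B) (red1 X, B \<union> A) (card A * g)"
proof (induction A rule: finite_induct)
  case empty
  then show ?case by (simp add: mpath.pnil)
next
  case (insert x F)
  then have p: "mpath V E (Suc 0) R g (red1 X, B) (red1 X, B \<union> F) (card F * g)" by simp
  have s: "mpp_step V E (Suc 0) g (red1 X, B \<union> F) (red1 X, (B \<union> F) \<union> (\<lambda>_. x) ` {0::nat}) g"
    by (rule mpp_step.R1) (use insert in \<open>auto simp: red1_def\<close>)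
  have "mpath V E (Suc 0) R g (red1 X, B) (red1 X, (B \<union> F) \<union> (\<lambda>_. x) ` {0::nat}) (card F * g + g)"
    by (rule mpath_snoc[OF p s]) (use insert in \<open>simp add: valid1_red1\<close>)
  then show ?case using insert by (simp add: Un_commute insert_commute add.commute)
qed

lemma red1_ins: "(\<lambda>j. if j \<in> {0} then insert x (red1 Y j) else red1 Y j) = red1 (insert x Y)"
  by (auto simp: red1_def fun_eq_iff)

lemma add_red_io: "finite A \<Longrightarrow> A \<subseteq> B \<Longrightarrow> finite (X \<union> A) \<Longrightarrow> card (X \<union> A) \<le> R \<Longrightarrow>
   mpath V E (Suc 0) R g (red1 X, B) (red1 (X \<union> A), B) (card A * g)"
proof (induction A rule: finite_induct)
  case empty
  then show ?case by (simp add: mpath.pnil valid1_red1)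
next
  case (insert x F)
  have "card (X \<union> F) \<le> card (X \<union> insert x F)" by (rule card_mono) (use insert in auto)
  then have p: "mpath V E (Suc 0) R g (red1 X, B) (red1 (X \<union> F), B) (card F * g)"
    using insert by simp
  have s: "mpp_step V E (Suc 0) g (red1 (X \<union> F), B)
     (\<lambda>j. if j \<in> {0} then insert x (red1 (X \<union> F) j) else red1 (X \<union> F) j, B) g"
    by (rule mpp_step.R2) (use insert in auto)
  have "mpath V E (Suc 0) R g (red1 X, B) (red1 (insert x (X \<union> F)), B) (card F * g + g)"
    by (rule mpath_snoc[OF p s[unfolded red1_ins]]) (use insert in \<open>simp add: valid1_red1\<close>)
  then show ?case using insert by (simp add: Un_commute insert_commute add.commute)
qed

lemma add_red_comp: "finite A \<Longrightarrow> A \<subseteq> V \<Longrightarrow> (\<forall>a\<in>A. \<forall>u. (u, a) \<in> E \<longrightarrow> u \<in> X) \<Longrightarrow>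
   finite (X \<union> A) \<Longrightarrow> card (X \<union> A) \<le> R \<Longrightarrow>
   mpath V E (Suc 0) R g (red1 X, B) (red1 (X \<union> A), B) (card A)"
proof (induction A rule: finite_induct)
  case empty
  then show ?case by (simp add: mpath.pnil valid1_red1)
next
  case (insert x F)
  have "card (X \<union> F) \<le> card (X \<union> insert x F)" by (rule card_mono) (use insert in auto)
  then have p: "mpath V E (Suc 0) R g (red1 X, B) (red1 (X \<union> F), B) (card F)"
    using insert by simp
  have s: "mpp_step V E (Suc 0) g (red1 (X \<union> F), B)
     (\<lambda>j. if j \<in> {0} then insert x (red1 (X \<union> F) j) else red1 (X \<union> F) j, B) 1"
    by (rule mpp_step.R3) (use insert in \<open>auto simp: red1_def\<close>)
  have "mpath V E (Suc 0) R g (red1 X, B) (red1 (insert x (X \<union> F)), B) (card F + 1)"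
    by (rule mpath_snoc[OF p s[unfolded red1_ins]]) (use insert in \<open>simp add: valid1_red1\<close>)
  then show ?case using insert by (simp add: Un_commute insert_commute)
qed



lemma card_img_le: "J \<subseteq> {..<k} \<Longrightarrow> card (v ` J) \<le> k"
proof -
  assume "J \<subseteq> {..<k}"
  then have "card J \<le> card {..<k}" by (rule card_mono[rotated]) simp
  then show ?thesis using card_image_le[of J v] \<open>J \<subseteq> {..<k}\<close> finite_subset by fastforce
qed

lemma fin_U: "fin c \<Longrightarrow> finite (U k c)"
  by (auto simp: fin_def U_def)

lemma sim_step:
  assumes st: "mpp_step V E k g c c' w" and vc: "valid_conf k r c" and vc': "valid_conf k r c'"
    and fc: "fin c" and fc': "fin c'"
  shows "\<exists>w1. mpath V E (Suc 0) (k * r) g (phi k c) (phi k c') w1 \<and> w1 \<le> k * w"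
  using st
proof (cases rule: mpp_step.cases)
  case (R1 J v R B)
  have fJ: "finite J" using R1 finite_subset by blast
  have "mpath V E (Suc 0) (k * r) g (red1 (U k c), B) (red1 (U k c), B \<union> v ` J) (card (v ` J) * g)"
    by (rule add_blue) (use R1 fJ valid_phi[OF vc] in \<open>auto simp: phi_def U_def\<close>)
  moreover have "card (v ` J) * g \<le> k * g" using card_img_le[of J k v] R1 by simp
  ultimately show ?thesis using R1 by (auto simp: phi_def U_def)
next
  case (R2 J v B R)
  have fJ: "finite J" using R2 finite_subset by blast
  have Ueq: "U k c' = U k c \<union> v ` J" using R2 by (auto simp: U_def split: if_splits)
  have fU: "finite (U k c \<union> v ` J)" using fin_U[OF fc', of k] Ueq by simp
  have cU: "card (U k c \<union> v ` J) \<le> k * r" using valid_phi[OF vc'] Ueq by (simp add: phi_def valid1_red1)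
  have "mpath V E (Suc 0) (k * r) g (red1 (U k c), B) (red1 (U k c \<union> v ` J), B) (card (v ` J) * g)"
    by (rule add_red_io) (use R2 fJ fU cU in \<open>auto simp: phi_def valid1_red1\<close>)
  moreover have "card (v ` J) * g \<le> k * g" using card_img_le[of J k v] R2 by simp
  ultimately show ?thesis using R2 Ueq by (auto simp: phi_def)
next
  case (R3 J v R B)
  have fJ: "finite J" using R3 finite_subset by blast
  have Ueq: "U k c' = U k c \<union> v ` J" using R3 by (auto simp: U_def split: if_splits)
  have fU: "finite (U k c \<union> v ` J)" using fin_U[OF fc', of k] Ueq by simp
  have cU: "card (U k c \<union> v ` J) \<le> k * r" using valid_phi[OF vc'] Ueq by (simp add: phi_def valid1_red1)
  have inn: "\<forall>a\<in>v ` J. \<forall>u. (u, a) \<in> E \<longrightarrow> u \<in> U k c"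
  proof (intro ballI allI impI)
    fix a u assume "a \<in> v ` J" "(u, a) \<in> E"
    then obtain j where "j \<in> J" "a = v j" by blast
    then show "u \<in> U k c" using R3 \<open>(u, a) \<in> E\<close> by (auto simp: U_def)
  qed
  have "mpath V E (Suc 0) (k * r) g (red1 (U k c), B) (red1 (U k c \<union> v ` J), B) (card (v ` J))"
    by (rule add_red_comp) (use R3 fJ fU cU inn in \<open>auto simp: phi_def valid1_red1\<close>)
  moreover have "card (v ` J) \<le> k * 1" using card_img_le[of J k v] R3 by simp
  ultimately show ?thesis using R3 Ueq by (auto simp: phi_def)
next
  case (R4_red j x R B)
  have sub: "U k c' \<subseteq> U k c" and sup: "U k c \<subseteq> insert x (U k c')" using R4_red
    by (auto simp: U_def)
  show ?thesis
  proof (cases "x \<in> U k c'")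
    case True
    then have "U k c' = U k c" using sub sup by blast
    then have "phi k c = phi k c'" using R4_red by (simp add: phi_def)
    then show ?thesis using mpath.pnil[OF valid_phi[OF vc]] R4_red by auto
  next
    case False
    then have Ueq: "U k c' = U k c - {x}" using sub sup by blast
    have xU: "x \<in> U k c" using R4_red by (auto simp: U_def)
    have s: "mpp_step V E (Suc 0) g (red1 (U k c), B) ((red1 (U k c))(0 := red1 (U k c) 0 - {x}), B) 0"
      by (rule mpp_step.R4_red) (use xU in \<open>auto simp: red1_def\<close>)
    have eq: "(red1 (U k c))(0 := red1 (U k c) 0 - {x}) = red1 (U k c')"
      using Ueq by (auto simp: red1_def fun_eq_iff)
    have "mpp_step V E (Suc 0) g (phi k c) (phi k c') 0"
      using s unfolding eq using R4_red by (simp add: phi_def)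
    from mpath.pcons[OF valid_phi[OF vc] this mpath.pnil[OF valid_phi[OF vc']]]
    have "mpath V E (Suc 0) (k * r) g (phi k c) (phi k c') (0 + 0)" .
    moreover have "(0::nat) + 0 \<le> k * w" by simp
    ultimately show ?thesis by blast
  qed
next
  case (R4_blue x B R)
  have s: "mpp_step V E (Suc 0) g (red1 (U k c), B) (red1 (U k c), B - {x}) 0"
    by (rule mpp_step.R4_blue) (use R4_blue in auto)
  have "U k c' = U k c" using R4_blue by (simp add: U_def)
  then have "mpp_step V E (Suc 0) g (phi k c) (phi k c') 0"
    using s R4_blue by (simp add: phi_def)
  from mpath.pcons[OF valid_phi[OF vc] this mpath.pnil[OF valid_phi[OF vc']]]
  have "mpath V E (Suc 0) (k * r) g (phi k c) (phi k c') (0 + 0)" .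
  moreover have "(0::nat) + 0 \<le> k * w" by simp
  ultimately show ?thesis by blast
qed

lemma sim_path: "mpath V E k r g c c'' w \<Longrightarrow> fin c \<Longrightarrow>
   \<exists>w1. mpath V E (Suc 0) (k * r) g (phi k c) (phi k c'') w1 \<and> w1 \<le> k * w"
proof (induction rule: mpath.induct)
  case (pnil c)
  then show ?case using mpath.pnil[OF valid_phi] by blast
next
  case (pcons c c' w c'' w')
  have fc': "fin c'" using fin_step pcons by blast
  obtain w2 where p2: "mpath V E (Suc 0) (k * r) g (phi k c') (phi k c'') w2" "w2 \<le> k * w'"
    using pcons fc' by blast
  have vc': "valid_conf k r c'" using mpath_valid[OF pcons.hyps(3)] by blast
  obtain w1 where p1: "mpath V E (Suc 0) (k * r) g (phi k c) (phi k c') w1" "w1 \<le> k * w"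
    using sim_step[OF pcons.hyps(2) pcons.hyps(1) vc' pcons.prems fc'] by blast
  show ?case using mpath_trans[OF p1(1) p2(1)] p1(2) p2(2) by (intro exI[of _ "w1 + w2"]) (simp add: algebra_simps)
qed

lemma phi_init: "phi k init_conf = init_conf"
  by (auto simp: phi_def init_conf_def U_def red1_def fun_eq_iff)

lemma phi_terminal: "terminal_conf V E k c \<Longrightarrow> terminal_conf V E (Suc 0) (phi k c)"
  by (auto simp: terminal_conf_def phi_def U_def red1_def)

lemma fin_init: "fin init_conf" by (simp add: fin_def init_conf_def)

definition S :: "'a conf \<Rightarrow> 'a set" where "S c = snd c \<union> (\<Union>j. fst c j)"

lemma step_S: "mpp_step V E k g c c' w \<Longrightarrow> \<exists>D. finite D \<and> S c' \<subseteq> S c \<union> D \<and> card D \<le> k * w"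
proof (induction rule: mpp_step.induct)
  case (R3 J v R B)
  have "finite J" using R3 finite_subset by blast
  then show ?case using R3 card_img_le[of J k v]
    by (intro exI[of _ "v ` J"]) (auto simp: S_def split: if_splits)
next
  case (R1 J v R B)
  then show ?case by (intro exI[of _ "{}"]) (auto simp: S_def)
next
  case (R2 J v B R)
  then show ?case by (intro exI[of _ "{}"]) (auto simp: S_def split: if_splits)
next
  case (R4_red j x R B)
  then show ?case by (intro exI[of _ "{}"]) (auto simp: S_def split: if_splits)
next
  case (R4_blue x B R)
  then show ?case by (intro exI[of _ "{}"]) (auto simp: S_def)
qed

lemma path_S: "mpath V E k r g c c'' w \<Longrightarrow> \<exists>C. finite C \<and> S c'' \<subseteq> S c \<union> C \<and> card C \<le> k * w"
proof (induction rule: mpath.induct)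
  case (pnil c)
  then show ?case by (intro exI[of _ "{}"]) auto
next
  case (pcons c c' w c'' w')
  obtain D where D: "finite D" "S c' \<subseteq> S c \<union> D" "card D \<le> k * w" using step_S[OF pcons.hyps(2)] by blast
  obtain C where C: "finite C" "S c'' \<subseteq> S c' \<union> C" "card C \<le> k * w'" using pcons.IH by blast
  have "card (D \<union> C) \<le> k * (w + w')" using card_Un_le[of D C] D C by (simp add: algebra_simps)
  then show ?case using D C by (intro exI[of _ "D \<union> C"]) auto
qed

lemma strat_lower: "is_strategy V E k r g cs ws \<Longrightarrow> dag V E \<Longrightarrow> card {v. is_sink V E v} \<le> k * sum_list ws"
proof -
  assume st: "is_strategy V E k r g cs ws" and d: "dag V E"
  obtain C where C: "finite C" "S (last cs) \<subseteq> S init_conf \<union> C" "card C \<le> k * sum_list ws"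
    using path_S[OF strat_to_path[OF st]] by blast
  have t: "terminal_conf V E k (last cs)" using st unfolding is_strategy_def by blast
  have "{v. is_sink V E v} \<subseteq> S (last cs)"
  proof
    fix v assume "v \<in> {v. is_sink V E v}"
    then have "v \<in> snd (last cs) \<union> (\<Union>j<k. fst (last cs) j)" using t unfolding terminal_conf_def by blast
    then show "v \<in> S (last cs)" unfolding S_def by blast
  qed
  moreover have "S init_conf = {}" by (simp add: S_def init_conf_def)
  ultimately have sub: "{v. is_sink V E v} \<subseteq> C" using C(2) by (metis Un_empty_left subset_trans)
  have "card {v. is_sink V E v} \<le> card C" by (rule card_mono[OF C(1) sub])
  then show ?thesis using C(3) by (rule order.trans)
qed
lemma sink_ex: "dag V E \<Longrightarrow> V \<noteq> {} \<Longrightarrow> \<exists>v. is_sink V E v"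
proof -
  assume d: "dag V E" and ne: "V \<noteq> {}"
  have "finite (V \<times> V)" "E \<subseteq> V \<times> V" using d by (auto simp: dag_def)
  then have "finite E" by (rule finite_subset[rotated])
  moreover have "acyclic E" using d by (simp add: dag_def)
  ultimately have wf: "wf (E\<inverse>)" by (rule finite_acyclic_wf_converse)
  obtain x where "x \<in> V" using ne by blast
  then obtain z where z: "z \<in> V" "\<forall>y. (y, z) \<in> E\<inverse> \<longrightarrow> y \<notin> V"
    using wf unfolding wf_eq_minimal by blast
  then have "is_sink V E z" using d by (auto simp: is_sink_def dag_def)
  then show ?thesis by blast
qed

lemma card_sinks_pos: "dag V E \<Longrightarrow> V \<noteq> {} \<Longrightarrow> card {v. is_sink V E v} \<ge> 1"
proof -
  assume d: "dag V E" and ne: "V \<noteq> {}"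
  have "{v. is_sink V E v} \<subseteq> V" by (auto simp: is_sink_def)
  then have "finite {v. is_sink V E v}" using d finite_subset by (auto simp: dag_def)
  moreover have "{v. is_sink V E v} \<noteq> {}" using sink_ex[OF d ne] by blast
  ultimately show ?thesis by (simp add: Suc_le_eq card_gt_0_iff)
qed



theorem lemma8:
  fixes k g r0 :: nat
  assumes "k > 0" and "g > 0" and "r0 > 0" and "k dvd r0"
  shows "(\<forall>(V :: 'a set) E.
            dag V E \<and> V \<noteq> {} \<and> pebblable V E k (r0 div k) g \<and> pebblable V E 1 r0 g
            \<longrightarrow> real (OPT V E k (r0 div k) g) / real (OPT V E 1 r0 g) \<ge> 1 / real k)
       \<and> (r0 div k \<ge> 2 \<longrightarrow>
            (\<exists>(V :: nat set) E.
               dag V E \<and> V \<noteq> {} \<and> pebblable V E k (r0 div k) g \<and> pebblable V E 1 r0 g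
               \<and> real (OPT V E k (r0 div k) g) / real (OPT V E 1 r0 g) = 1 / real k))"
proof (intro conjI)
  have kr: "k * (r0 div k) = r0" using assms(4) by simp
  show "\<forall>(V :: 'a set) E.
            dag V E \<and> V \<noteq> {} \<and> pebblable V E k (r0 div k) g \<and> pebblable V E 1 r0 g
            \<longrightarrow> real (OPT V E k (r0 div k) g) / real (OPT V E 1 r0 g) \<ge> 1 / real k"
  proof (intro allI impI)
    fix V :: "'a set" and E
    assume H: "dag V E \<and> V \<noteq> {} \<and> pebblable V E k (r0 div k) g \<and> pebblable V E 1 r0 g"
    obtain cs ws where s: "is_strategy V E k (r0 div k) g cs ws" "sum_list ws = OPT V E k (r0 div k) g"
      using opt_ex H by blast
    have fl: "mpath V E k (r0 div k) g init_conf (last cs) (sum_list ws)" by (rule strat_to_path[OF s(1)])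
    obtain w1 where w1: "mpath V E (Suc 0) (k * (r0 div k)) g (phi k init_conf) (phi k (last cs)) w1"
      "w1 \<le> k * sum_list ws"
      using sim_path[OF fl fin_init] by blast
    have tm: "terminal_conf V E (Suc 0) (phi k (last cs))"
      using phi_terminal s(1) unfolding is_strategy_def by blast
    obtain cs1 ws1 where c1: "is_strategy V E (Suc 0) r0 g cs1 ws1" "sum_list ws1 = w1"
      using path_to_strat[OF w1(1)[unfolded phi_init kr] tm] by blast
    have o1: "OPT V E 1 r0 g \<le> k * OPT V E k (r0 div k) g"
      using opt_le[OF c1(1)] c1(2) w1(2) s(2) by simp
    obtain cs2 ws2 where c2: "is_strategy V E 1 r0 g cs2 ws2" "sum_list ws2 = OPT V E 1 r0 g"
      using opt_ex H by blast
    have "card {v. is_sink V E v} \<le> 1 * OPT V E 1 r0 g"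
      using strat_lower[OF c2(1)] c2(2) H by simp
    then have pos: "OPT V E 1 r0 g \<ge> 1" using card_sinks_pos[of V E] H by simp
    have "real (OPT V E 1 r0 g) \<le> real k * real (OPT V E k (r0 div k) g)"
      using o1 by (metis of_nat_le_iff of_nat_mult)
    then show "real (OPT V E k (r0 div k) g) / real (OPT V E 1 r0 g) \<ge> 1 / real k"
      using pos assms(1) by (simp add: field_simps)
  qed
  show "r0 div k \<ge> 2 \<longrightarrow>
            (\<exists>(V :: nat set) E.
               dag V E \<and> V \<noteq> {} \<and> pebblable V E k (r0 div k) g \<and> pebblable V E 1 r0 g
               \<and> real (OPT V E k (r0 div k) g) / real (OPT V E 1 r0 g) = 1 / real k)"
  proof
    assume r2: "r0 div k \<ge> 2"
    define V :: "nat set" where "V = {..<k}"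
    define E :: "(nat \<times> nat) set" where "E = {}"
    have d: "dag V E" by (simp add: dag_def V_def E_def acyclic_def)
    have ne: "V \<noteq> {}" using assms(1) by (auto simp: V_def)
    have sk: "{v. is_sink V E v} = {..<k}" by (auto simp: is_sink_def V_def E_def)
    define c1 :: "nat conf" where "c1 = (\<lambda>j. if j \<in> {..<k} then insert (id j) ((\<lambda>_. {}) j) else (\<lambda>_. {}) j, {})"
    have st: "mpp_step V E k g ((\<lambda>_. {}), {}) c1 1"
      unfolding c1_def by (rule mpp_step.R3) (use assms(1) in \<open>auto simp: V_def E_def\<close>)
    have v0: "valid_conf k (r0 div k) init_conf" by (simp add: valid_conf_def init_conf_def)
    have v1: "valid_conf k (r0 div k) c1" using r2 by (auto simp: valid_conf_def c1_def)
    have pk: "mpath V E k (r0 div k) g init_conf c1 (1 + 0)"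
      using mpath.pcons[OF v0 _ mpath.pnil[OF v1]] st by (simp add: init_conf_def)
    have t1: "terminal_conf V E k c1" by (auto simp: terminal_conf_def c1_def is_sink_def V_def)
    obtain csk wsk where sk1: "is_strategy V E k (r0 div k) g csk wsk" "sum_list wsk = 1"
      using path_to_strat[OF pk t1] by auto
    have pebk: "pebblable V E k (r0 div k) g" using sk1 by (auto simp: pebblable_def)
    have ok1: "OPT V E k (r0 div k) g \<le> 1" using opt_le[OF sk1(1)] sk1(2) by simp
    obtain csk2 wsk2 where sk2: "is_strategy V E k (r0 div k) g csk2 wsk2" "sum_list wsk2 = OPT V E k (r0 div k) g"
      using opt_ex[OF pebk] by blast
    have "k \<le> k * OPT V E k (r0 div k) g" using strat_lower[OF sk2(1) d] sk2(2) sk by simp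
    then have okeq: "OPT V E k (r0 div k) g = 1" using ok1 assms(1) by (cases "OPT V E k (r0 div k) g") auto
    have r0k: "k \<le> r0" using kr r2 by (metis le_add1 mult_2_right mult_le_mono2 order_trans)
    have p1: "mpath V E (Suc 0) r0 g (red1 {}, {}) (red1 ({} \<union> {..<k}), {}) (card {..<k})"
      by (rule add_red_comp) (use r0k in \<open>auto simp: V_def E_def\<close>)
    have ri: "(red1 {}, {}) = (init_conf :: nat conf)" by (auto simp: red1_def init_conf_def fun_eq_iff)
    have t2: "terminal_conf V E (Suc 0) (red1 ({} \<union> {..<k}), {})"
      by (auto simp: terminal_conf_def red1_def is_sink_def V_def)
    obtain cs1 ws1 where s1: "is_strategy V E (Suc 0) r0 g cs1 ws1" "sum_list ws1 = k"
      using path_to_strat[OF p1[unfolded ri] t2] by auto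
    have peb1: "pebblable V E 1 r0 g" using s1 by (auto simp: pebblable_def)
    have o1: "OPT V E 1 r0 g \<le> k" using opt_le[OF s1(1)] s1(2) by simp
    obtain cs2 ws2 where s2: "is_strategy V E 1 r0 g cs2 ws2" "sum_list ws2 = OPT V E 1 r0 g"
      using opt_ex[OF peb1] by blast
    have "k \<le> OPT V E 1 r0 g" using strat_lower[OF s2(1) d] s2(2) sk by simp
    then have o1eq: "OPT V E 1 r0 g = k" using o1 by simp
    show "\<exists>(V :: nat set) E.
               dag V E \<and> V \<noteq> {} \<and> pebblable V E k (r0 div k) g \<and> pebblable V E 1 r0 g
               \<and> real (OPT V E k (r0 div k) g) / real (OPT V E 1 r0 g) = 1 / real k"
      using d ne pebk peb1 okeq o1eq by (intro exI[of _ V] exI[of _ E]) simp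
  qed
qed

end
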